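(* Consider a robust constrained MDP as described in the context, and assume that the robust constrained problem $\min_{\pi} J_{c_0}^{\pi}$ subject to $J_{c_n}^{\pi}\le b_n$ for $n=1,\dots,K$ admits an optimal (in particular feasible) policy $\pi^*$. Let $\epsilon>0$, set $\lambda = 2H/\epsilon$ with $H=1/(1-\gamma)$, and let $\hat\pi^*$ be an optimal policy of the surrogate problem $$\min_{\pi}\ \max\Big\{ J_{c_0}^{\pi}/\lambda,\ \max_{n\in\{1,\dots,K\}} \big[J_{c_n}^{\pi}-b_n\big]\Big\}.$$ Then $J_{c_0}^{\hat\pi^*}\le J_{c_0}^{\pi^*}$, and $\hat\pi^*$ violates the constraints by at most $\epsilon$, i.e. $\max_{n\in\{1,\dots,K\}}\big[J_{c_n}^{\hat\pi^*}-b_n\big]\le \epsilon$.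
   Context: Setting: a finite state space $\mathcal S$ (with $S=|\mathcal S|$), finite action space $\mathcal A$, discount factor $\gamma\in[0,1)$, cost functions $c_0,c_1,\dots,c_K:\mathcal S\times\mathcal A\to[0,1]$ ($c_0$ is the objective cost, $c_1,\dots,c_K$ constraint costs), thresholds $b_1,\dots,b_K\in\mathbb R$, and an initial state distribution $\mu$. A nominal transition kernel $P_0$ is given, and the uncertainty set is $(s,a)$-rectangular: $\mathbb P=\bigotimes_{(s,a)}\mathbb P_{(s,a)}$ with $\mathbb P_{(s,a)}=\{P\in\Delta(\mathcal S): D(P,P_0(\cdot|s,a))\le \rho\}$ for a distance $D$ between distributions and radius $\rho\ge 0$. For a (Markovian, stochastic) policy $\pi$ and kernel $P$, $J_{c_i}^{\pi,P}=\mathbb E_{s_0\sim\mu,\pi,P}\big[\sum_{t\ge 0}\gamma^t c_i(s_t,a_t)\big]$, and the robust value is $J_{c_i}^{\pi}=\max_{P\in\mathbb P}J_{c_i}^{\pi,P}$. Note $0\le J_{c_i}^{\pi}\le H:=1/(1-\gamma)$. Policies range over all Markovian stochastic policies. *)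

theory Defs
  imports "HOL-Probability.Probability"
begin

text \<open>Stationary Markovian stochastic policies: 's \<Rightarrow> 'a pmf.
  Transition kernels: 's \<Rightarrow> 'a \<Rightarrow> 's pmf.\<close>

primrec state_dist ::
  "('s \<Rightarrow> 'a \<Rightarrow> 's pmf) \<Rightarrow> ('s \<Rightarrow> 'a pmf) \<Rightarrow> 's pmf \<Rightarrow> nat \<Rightarrow> 's pmf" where
  "state_dist P \<pi> \<mu> 0 = \<mu>"
| "state_dist P \<pi> \<mu> (Suc t) =
     bind_pmf (state_dist P \<pi> \<mu> t) (\<lambda>s. bind_pmf (\<pi> s) (\<lambda>a. P s a))"

definition disc_cost ::
  "real \<Rightarrow> 's pmf \<Rightarrow> ('s \<Rightarrow> 'a \<Rightarrow> real) \<Rightarrow> ('s \<Rightarrow> 'a \<Rightarrow> 's pmf) \<Rightarrow> ('s \<Rightarrow> 'a pmf) \<Rightarrow> real" where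
  "disc_cost \<gamma> \<mu> c P \<pi> =
     (\<Sum>t. \<gamma> ^ t * measure_pmf.expectation (state_dist P \<pi> \<mu> t)
                 (\<lambda>s. measure_pmf.expectation (\<pi> s) (\<lambda>a. c s a)))"

definition uncertainty_set ::
  "('s pmf \<Rightarrow> 's pmf \<Rightarrow> real) \<Rightarrow> real \<Rightarrow> ('s \<Rightarrow> 'a \<Rightarrow> 's pmf) \<Rightarrow> ('s \<Rightarrow> 'a \<Rightarrow> 's pmf) set" where
  "uncertainty_set D \<rho> P0 = {P. \<forall>s a. D (P s a) (P0 s a) \<le> \<rho>}"

definition robust_cost ::
  "real \<Rightarrow> 's pmf \<Rightarrow> ('s pmf \<Rightarrow> 's pmf \<Rightarrow> real) \<Rightarrow> real \<Rightarrow> ('s \<Rightarrow> 'a \<Rightarrow> 's pmf)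
     \<Rightarrow> ('s \<Rightarrow> 'a \<Rightarrow> real) \<Rightarrow> ('s \<Rightarrow> 'a pmf) \<Rightarrow> real" where
  "robust_cost \<gamma> \<mu> D \<rho> P0 c \<pi> = (SUP P \<in> uncertainty_set D \<rho> P0. disc_cost \<gamma> \<mu> c P \<pi>)"

end

theory Submission
  imports Defs
begin

lemma exp01:
  fixes p :: "'x::finite pmf"
  assumes "\<And>x. 0 \<le> f x \<and> f x \<le> (1::real)"
  shows "0 \<le> measure_pmf.expectation p f \<and> measure_pmf.expectation p f \<le> 1"
proof
  show "0 \<le> measure_pmf.expectation p f" using assms by (simp add: integral_nonneg)
  have "measure_pmf.expectation p f \<le> measure_pmf.expectation p (\<lambda>_. 1)"
    by (rule integral_mono) (auto simp: integrable_measure_pmf_finite assms)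
  then show "measure_pmf.expectation p f \<le> 1" by simp
qed

lemma disc_bounds:
  fixes c :: "'s::finite \<Rightarrow> 'a::finite \<Rightarrow> real"
  assumes g: "0 \<le> \<gamma>" "\<gamma> < 1" and cr: "\<And>s a. 0 \<le> c s a \<and> c s a \<le> 1"
  shows "0 \<le> disc_cost \<gamma> \<mu> c P \<pi> \<and> disc_cost \<gamma> \<mu> c P \<pi> \<le> 1 / (1 - \<gamma>)"
proof -
  define E where "E t = measure_pmf.expectation (state_dist P \<pi> \<mu> t)
                 (\<lambda>s. measure_pmf.expectation (\<pi> s) (\<lambda>a. c s a))" for t
  have E: "0 \<le> E t \<and> E t \<le> 1" for t
    unfolding E_def by (rule exp01) (rule exp01, rule cr)
  have geo: "summable (\<lambda>t. \<gamma> ^ t)" using g by (simp add: summable_geometric)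
  have le: "\<gamma> ^ t * E t \<le> \<gamma> ^ t" for t using E[of t] g
    by (simp add: mult_left_le)
  have nn: "0 \<le> \<gamma> ^ t * E t" for t using E[of t] g by simp
  have sm: "summable (\<lambda>t. \<gamma> ^ t * E t)"
    by (rule summable_comparison_test[OF _ geo]) (use le nn in auto)
  have "disc_cost \<gamma> \<mu> c P \<pi> = (\<Sum>t. \<gamma> ^ t * E t)" unfolding disc_cost_def E_def ..
  moreover have "(\<Sum>t. \<gamma> ^ t * E t) \<le> (\<Sum>t. \<gamma> ^ t)" by (rule suminf_le[OF le sm geo])
  moreover have "(\<Sum>t. \<gamma> ^ t) = 1 / (1 - \<gamma>)" using g by (simp add: suminf_geometric)
  moreover have "0 \<le> (\<Sum>t. \<gamma> ^ t * E t)" by (rule suminf_nonneg[OF sm nn])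
  ultimately show ?thesis by simp
qed

lemma robust_bounds:
  fixes c :: "'s::finite \<Rightarrow> 'a::finite \<Rightarrow> real"
  assumes g: "0 \<le> \<gamma>" "\<gamma> < 1" and cr: "\<And>s a. 0 \<le> c s a \<and> c s a \<le> 1"
    and rho: "0 \<le> \<rho>" and D: "\<And>p. D p p = 0"
  shows "0 \<le> robust_cost \<gamma> \<mu> D \<rho> P0 c \<pi> \<and> robust_cost \<gamma> \<mu> D \<rho> P0 c \<pi> \<le> 1 / (1 - \<gamma>)"
proof -
  have P0: "P0 \<in> uncertainty_set D \<rho> P0" using rho D by (simp add: uncertainty_set_def)
  have b: "disc_cost \<gamma> \<mu> c P \<pi> \<le> 1 / (1 - \<gamma>)" for P using disc_bounds[OF g, of c, OF cr] by blast
  have bdd: "bdd_above ((\<lambda>P. disc_cost \<gamma> \<mu> c P \<pi>) ` uncertainty_set D \<rho> P0)"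
    using b by (intro bdd_aboveI[where M="1 / (1 - \<gamma>)"]) auto
  have "0 \<le> disc_cost \<gamma> \<mu> c P0 \<pi>" using disc_bounds[OF g, of c, OF cr] by blast
  also have "\<dots> \<le> robust_cost \<gamma> \<mu> D \<rho> P0 c \<pi>" unfolding robust_cost_def
    by (rule cSUP_upper[OF P0 bdd])
  finally show ?thesis unfolding robust_cost_def using P0 b
    by (auto intro!: cSUP_least)
qed
theorem proposition1:
  fixes \<gamma> \<rho> \<epsilon> :: real
    and K :: nat
    and c :: "nat \<Rightarrow> 's::finite \<Rightarrow> 'a::finite \<Rightarrow> real"
    and b :: "nat \<Rightarrow> real"
    and \<mu> :: "'s pmf"
    and P0 :: "'s \<Rightarrow> 'a \<Rightarrow> 's pmf"
    and D :: "'s pmf \<Rightarrow> 's pmf \<Rightarrow> real"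
    and \<pi>opt \<pi>hat :: "'s \<Rightarrow> 'a pmf"
  defines "J \<equiv> \<lambda>i \<pi>. robust_cost \<gamma> \<mu> D \<rho> P0 (c i) \<pi>"
    and "H \<equiv> 1 / (1 - \<gamma>)"
  defines "lam \<equiv> 2 * H / \<epsilon>"
  defines "F \<equiv> \<lambda>\<pi>. Max ({J 0 \<pi> / lam} \<union> {J n \<pi> - b n | n. n \<in> {1..K}})"
  assumes gamma: "0 \<le> \<gamma>" "\<gamma> < 1"
    and rho: "0 \<le> \<rho>"
    and D_refl: "\<And>p. D p p = 0"
    and cost_range: "\<And>i s a. i \<le> K \<Longrightarrow> 0 \<le> c i s a \<and> c i s a \<le> 1"
    and opt_feasible: "\<forall>n \<in> {1..K}. J n \<pi>opt \<le> b n"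
    and opt_optimal: "\<And>\<pi>. (\<forall>n \<in> {1..K}. J n \<pi> \<le> b n) \<Longrightarrow> J 0 \<pi>opt \<le> J 0 \<pi>"
    and eps: "\<epsilon> > 0"
    and hat_optimal: "\<And>\<pi>. F \<pi>hat \<le> F \<pi>"
  shows "J 0 \<pi>hat \<le> J 0 \<pi>opt \<and> (\<forall>n \<in> {1..K}. J n \<pi>hat - b n \<le> \<epsilon>)"
  proof -
  have Jb: "0 \<le> J i \<pi> \<and> J i \<pi> \<le> H" if "i \<le> K" for i \<pi>
    unfolding J_def H_def
    by (rule robust_bounds[OF gamma _ rho D_refl]) (use cost_range that in blast)
  have Hpos: "H > 0" using gamma by (simp add: H_def)
  have lampos: "lam > 0" using Hpos eps by (simp add: lam_def)
  define S where "S \<pi> = {J 0 \<pi> / lam} \<union> {J n \<pi> - b n | n. n \<in> {1..K}}" for \<pi>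
  have fin: "finite (S \<pi>)" for \<pi>
  proof -
    have "{J n \<pi> - b n | n. n \<in> {1..K}} = (\<lambda>n. J n \<pi> - b n) ` {1..K}" by auto
    then show ?thesis unfolding S_def by simp
  qed
  have FS: "F \<pi> = Max (S \<pi>)" for \<pi> unfolding F_def S_def ..
  have ge0: "J 0 \<pi> / lam \<le> F \<pi>" for \<pi> unfolding FS by (rule Max_ge[OF fin]) (simp add: S_def)
  have gen: "J n \<pi> - b n \<le> F \<pi>" if "n \<in> {1..K}" for n \<pi>
    unfolding FS by (rule Max_ge[OF fin]) (use that in \<open>auto simp: S_def\<close>)
  have J0opt: "0 \<le> J 0 \<pi>opt" "J 0 \<pi>opt \<le> H" using Jb[of 0] by auto
  have Fopt: "F \<pi>opt \<le> J 0 \<pi>opt / lam"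
    unfolding FS
  proof (rule Max.boundedI[OF fin])
    show "S \<pi>opt \<noteq> {}" by (simp add: S_def)
    fix x assume "x \<in> S \<pi>opt"
    then show "x \<le> J 0 \<pi>opt / lam"
    proof -
      have "0 \<le> J 0 \<pi>opt / lam" using J0opt lampos by simp
      then show ?thesis using \<open>x \<in> S \<pi>opt\<close> opt_feasible unfolding S_def by force
    qed
  qed
  have key: "F \<pi>hat \<le> J 0 \<pi>opt / lam" using hat_optimal[of \<pi>opt] Fopt by linarith
  have A: "J 0 \<pi>hat \<le> J 0 \<pi>opt"
    proof -
    have "J 0 \<pi>hat / lam \<le> J 0 \<pi>opt / lam" using ge0[of \<pi>hat] key by linarith
    then show ?thesis using lampos by (simp add: divide_le_cancel)
  qed
  have "J 0 \<pi>opt / lam \<le> H / lam" using J0opt lampos by (simp add: divide_right_mono)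
  also have "H / lam = \<epsilon> / 2" using Hpos eps by (simp add: lam_def)
  finally have "F \<pi>hat \<le> \<epsilon>" using key eps by linarith
  then show ?thesis using A gen[of _ \<pi>hat] by force
qed

end
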